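(* Let $\mathcal A$ be a small abelian category. The map $\mathsf{Cob}^b_0(\mathcal A)\to K_0^+(\mathcal A)$ sending the class of a positive $\mathcal A$-decorated 0-foam with points labelled $X_1,\dots,X_n$ to $[X_1]+\dots+[X_n]$ is a well-defined isomorphism of commutative monoids.
   Context: $K_0^+(\mathcal A)$ is the commutative monoid generated by symbols $[X]$, $X\in\mathrm{Ob}(\mathcal A)$, with relations $[X_2]=[X_1]+[X_3]$ for each short exact sequence $0\to X_1\to X_2\to X_3\to0$ (no inverses adjoined). A positive $\mathcal A$-decorated 0-foam is a finite set of points, each labelled by an object of $\mathcal A$ (and carrying the sign $+$). An $\mathcal A$-decorated 1-foam is a finite oriented graph with trivalent interior vertices. Each vertex is either "in" (two edges in, one out) or "out" (one in, two out); the two edges of equal orientation type are thin and the third is thick. The foam carries a flat connection with fibers in $\mathcal A$. At each vertex the thin edges are ordered (first, second), and a short exact sequence $0\to X_{\mathrm{first}}\to X_{\mathrm{thick}}\to X_{\mathrm{second}}\to0$ of nearby fibers is fixed. A braid-like cobordism from a positive 0-foam $M_0$ to a positive 0-foam $M_1$ is an $\mathcal A$-decorated 1-foam $U$ with boundary $M_0\sqcup M_1$, together with a continuous function $h:U\to[0,1]$ satisfying: - $h^{-1}(0)=M_0$ and $h^{-1}(1)=M_1$; - $h$ is strictly increasing along every edge in the direction of its orientation. In particular there are no local maxima or minima, and every edge is oriented from $M_0$ towards $M_1$. $\mathsf{Cob}^b_0(\mathcal A)$ is the set of positive $\mathcal A$-decorated 0-foams modulo the equivalence relation generated by the existence of a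 braid-like cobordism. It is a commutative monoid under disjoint union. *)

theory Defs
  imports Complex_Main "HOL-Library.Multiset"
begin

record ('o, 'm) cat =
  Dom  :: "'m \<Rightarrow> 'o"
  Cod  :: "'m \<Rightarrow> 'o"
  Comp :: "'m \<Rightarrow> 'm \<Rightarrow> 'm"   \<comment> \<open>Comp C g f = g after f, defined when Cod f = Dom g\<close>
  Idm  :: "'o \<Rightarrow> 'm"

definition hom :: "('o,'m) cat \<Rightarrow> 'o \<Rightarrow> 'o \<Rightarrow> 'm set" where
  "hom C X Y = {f. Dom C f = X \<and> Cod C f = Y}"

definition is_category :: "('o,'m) cat \<Rightarrow> bool" where
  "is_category C \<longleftrightarrow>
     (\<forall>X. Idm C X \<in> hom C X X) \<and>
     (\<forall>f g. Cod C f = Dom C g \<longrightarrow> Comp C g f \<in> hom C (Dom C f) (Cod C g)) \<and>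
     (\<forall>f. Comp C f (Idm C (Dom C f)) = f \<and> Comp C (Idm C (Cod C f)) f = f) \<and>
     (\<forall>f g h. Cod C f = Dom C g \<and> Cod C g = Dom C h \<longrightarrow>
        Comp C h (Comp C g f) = Comp C (Comp C h g) f)"

definition is_zero_object :: "('o,'m) cat \<Rightarrow> 'o \<Rightarrow> bool" where
  "is_zero_object C Z \<longleftrightarrow> (\<forall>X. (\<exists>!f. f \<in> hom C Z X) \<and> (\<exists>!f. f \<in> hom C X Z))"

definition zero_mor :: "('o,'m) cat \<Rightarrow> 'm \<Rightarrow> bool" where
  "zero_mor C f \<longleftrightarrow> (\<exists>Z a b. is_zero_object C Z \<and> a \<in> hom C (Dom C f) Z \<and>
      b \<in> hom C Z (Cod C f) \<and> f = Comp C b a)"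

definition mono :: "('o,'m) cat \<Rightarrow> 'm \<Rightarrow> bool" where
  "mono C f \<longleftrightarrow> (\<forall>g h. Cod C g = Dom C f \<and> Cod C h = Dom C f \<and> Dom C g = Dom C h \<and>
      Comp C f g = Comp C f h \<longrightarrow> g = h)"

definition epi :: "('o,'m) cat \<Rightarrow> 'm \<Rightarrow> bool" where
  "epi C f \<longleftrightarrow> (\<forall>g h. Dom C g = Cod C f \<and> Dom C h = Cod C f \<and> Cod C g = Cod C h \<and>
      Comp C g f = Comp C h f \<longrightarrow> g = h)"

definition iso :: "('o,'m) cat \<Rightarrow> 'm \<Rightarrow> bool" where
  "iso C f \<longleftrightarrow> (\<exists>g. g \<in> hom C (Cod C f) (Dom C f) \<and>
      Comp C g f = Idm C (Dom C f) \<and> Comp C f g = Idm C (Cod C f))"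

definition isomorphic :: "('o,'m) cat \<Rightarrow> 'o \<Rightarrow> 'o \<Rightarrow> bool" where
  "isomorphic C X Y \<longleftrightarrow> (\<exists>f. f \<in> hom C X Y \<and> iso C f)"

definition is_kernel :: "('o,'m) cat \<Rightarrow> 'm \<Rightarrow> 'm \<Rightarrow> bool" where
  "is_kernel C k f \<longleftrightarrow> Cod C k = Dom C f \<and> zero_mor C (Comp C f k) \<and>
     (\<forall>g. Cod C g = Dom C f \<and> zero_mor C (Comp C f g) \<longrightarrow>
        (\<exists>!u. u \<in> hom C (Dom C g) (Dom C k) \<and> Comp C k u = g))"

definition is_cokernel :: "('o,'m) cat \<Rightarrow> 'm \<Rightarrow> 'm \<Rightarrow> bool" where
  "is_cokernel C c f \<longleftrightarrow> Dom C c = Cod C f \<and> zero_mor C (Comp C c f) \<and>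
     (\<forall>g. Dom C g = Cod C f \<and> zero_mor C (Comp C g f) \<longrightarrow>
        (\<exists>!u. u \<in> hom C (Cod C c) (Cod C g) \<and> Comp C u c = g))"

definition is_product :: "('o,'m) cat \<Rightarrow> 'o \<Rightarrow> 'm \<Rightarrow> 'm \<Rightarrow> 'o \<Rightarrow> 'o \<Rightarrow> bool" where
  "is_product C P p1 p2 X Y \<longleftrightarrow> p1 \<in> hom C P X \<and> p2 \<in> hom C P Y \<and>
     (\<forall>Q f g. f \<in> hom C Q X \<and> g \<in> hom C Q Y \<longrightarrow>
        (\<exists>!u. u \<in> hom C Q P \<and> Comp C p1 u = f \<and> Comp C p2 u = g))"

definition is_coproduct :: "('o,'m) cat \<Rightarrow> 'o \<Rightarrow> 'm \<Rightarrow> 'm \<Rightarrow> 'o \<Rightarrow> 'o \<Rightarrow> bool" where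
  "is_coproduct C S i1 i2 X Y \<longleftrightarrow> i1 \<in> hom C X S \<and> i2 \<in> hom C Y S \<and>
     (\<forall>Q f g. f \<in> hom C X Q \<and> g \<in> hom C Y Q \<longrightarrow>
        (\<exists>!u. u \<in> hom C S Q \<and> Comp C u i1 = f \<and> Comp C u i2 = g))"

text \<open>Smallness is automatic: objects and morphisms form the types 'o and 'm.\<close>
definition abelian_category :: "('o,'m) cat \<Rightarrow> bool" where
  "abelian_category C \<longleftrightarrow> is_category C \<and>
     (\<exists>Z. is_zero_object C Z) \<and>
     (\<forall>X Y. \<exists>P p1 p2. is_product C P p1 p2 X Y) \<and>
     (\<forall>X Y. \<exists>S i1 i2. is_coproduct C S i1 i2 X Y) \<and>
     (\<forall>f. \<exists>k. is_kernel C k f) \<and>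
     (\<forall>f. \<exists>c. is_cokernel C c f) \<and>
     (\<forall>f. mono C f \<longrightarrow> (\<exists>g. is_kernel C f g)) \<and>
     (\<forall>f. epi C f \<longrightarrow> (\<exists>g. is_cokernel C f g))"

definition ses :: "('o,'m) cat \<Rightarrow> 'o \<Rightarrow> 'o \<Rightarrow> 'o \<Rightarrow> bool" where
  "ses C X1 X2 X3 \<longleftrightarrow> (\<exists>f g. f \<in> hom C X1 X2 \<and> g \<in> hom C X2 X3 \<and>
      mono C f \<and> epi C g \<and> is_kernel C f g)"

text \<open>Elements of the free commutative monoid on the objects are finite multisets of objects;
  K_0^+ is its quotient by the monoid congruence generated by [X2] = [X1] + [X3].\<close>
inductive K0_eq :: "('o,'m) cat \<Rightarrow> 'o multiset \<Rightarrow> 'o multiset \<Rightarrow> bool" for C where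
  K0_gen: "ses C X1 X2 X3 \<Longrightarrow> K0_eq C (add_mset X2 M) (add_mset X1 (add_mset X3 M))"
| K0_refl: "K0_eq C M M"
| K0_sym: "K0_eq C M N \<Longrightarrow> K0_eq C N M"
| K0_trans: "K0_eq C M N \<Longrightarrow> K0_eq C N P \<Longrightarrow> K0_eq C M P"

text \<open>A positive 0-foam is represented by the multiset of its labels.
  A braid-like cobordism is encoded combinatorially: boundary points P0 (bottom), P1 (top),
  interior vertices V (all naturals), edges E with source/target; each edge carries a fiber
  lab e (the flat connection identifies all fibers along an edge up to isomorphism);
  the height function is recorded on vertices (and interpolated linearly on edges).\<close>
definition braid_cob :: "('o,'m) cat \<Rightarrow> 'o multiset \<Rightarrow> 'o multiset \<Rightarrow> bool" where
  "braid_cob C M0 M1 \<longleftrightarrow>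
    (\<exists>(P0::nat set) P1 V (E::nat set) (lp::nat \<Rightarrow> 'o) (src::nat \<Rightarrow> nat) (tgt::nat \<Rightarrow> nat)
       (lab::nat \<Rightarrow> 'o) (ht::nat \<Rightarrow> real).
       finite P0 \<and> finite P1 \<and> finite V \<and> finite E \<and>
       P0 \<inter> P1 = {} \<and> P0 \<inter> V = {} \<and> P1 \<inter> V = {} \<and>
       image_mset lp (mset_set P0) = M0 \<and> image_mset lp (mset_set P1) = M1 \<and>
       (\<forall>e\<in>E. src e \<in> P0 \<union> P1 \<union> V \<and> tgt e \<in> P0 \<union> P1 \<union> V) \<and>
       \<comment> \<open>boundary points are univalent, with fiber isomorphic to their label\<close>
       (\<forall>p\<in>P0 \<union> P1. \<exists>e\<in>E. {e'\<in>E. src e' = p \<or> tgt e' = p} = {e} \<and>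
            isomorphic C (lp p) (lab e)) \<and>
       \<comment> \<open>interior vertices are trivalent, of type in or out, with a short exact sequence
           0 -> X_first -> X_thick -> X_second -> 0\<close>
       (\<forall>v\<in>V. \<exists>e1 e2 e3. e1 \<in> E \<and> e2 \<in> E \<and> e3 \<in> E \<and> e1 \<noteq> e2 \<and>
            ((({e\<in>E. tgt e = v} = {e1, e2} \<and> {e\<in>E. src e = v} = {e3}) \<or>
              ({e\<in>E. src e = v} = {e1, e2} \<and> {e\<in>E. tgt e = v} = {e3})) \<and>
             ses C (lab e1) (lab e3) (lab e2))) \<and>
       \<comment> \<open>height function\<close>
       (\<forall>p\<in>P0. ht p = 0) \<and> (\<forall>p\<in>P1. ht p = 1) \<and> (\<forall>v\<in>V. 0 < ht v \<and> ht v < 1) \<and>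
       (\<forall>e\<in>E. ht (src e) < ht (tgt e)))"

text \<open>Equivalence relation on positive 0-foams generated by braid-like cobordisms;
  Cob^b_0(A) is the quotient by it.\<close>
definition cob_equiv :: "('o,'m) cat \<Rightarrow> 'o multiset \<Rightarrow> 'o multiset \<Rightarrow> bool" where
  "cob_equiv C = (\<lambda>M N. braid_cob C M N \<or> braid_cob C N M)\<^sup>*\<^sup>*"

end

theory Submission
  imports Defs
begin


lemma K0_add: "K0_eq C M N \<Longrightarrow> K0_eq C (M + P) (N + P)"
proof (induction rule: K0_eq.induct)
  case (K0_gen X1 X2 X3 M)
  then show ?case using K0_eq.K0_gen[of C X1 X2 X3 "M+P"] by simp
qed (auto intro: K0_eq.intros)

lemma K0_add2: "K0_eq C M N \<Longrightarrow> K0_eq C P Q \<Longrightarrow> K0_eq C (M + P) (N + Q)"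
proof -
  assume a: "K0_eq C M N" and b: "K0_eq C P Q"
  have 1: "K0_eq C (M + P) (N + P)" using K0_add[OF a] .
  have "K0_eq C (P + N) (Q + N)" using K0_add[OF b] .
  hence "K0_eq C (N + P) (N + Q)" by (simp add: add.commute)
  thus ?thesis using 1 K0_eq.K0_trans by blast
qed

lemma K0_image:
  assumes "finite A" "\<And>x. x \<in> A \<Longrightarrow> K0_eq C {#f x#} {#g x#}"
  shows "K0_eq C (image_mset f (mset_set A)) (image_mset g (mset_set A))"
  using assms
proof (induction A rule: finite_induct)
  case empty then show ?case by (simp add: K0_eq.K0_refl)
next
  case (insert x F)
  have "K0_eq C ({#f x#} + image_mset f (mset_set F)) ({#g x#} + image_mset g (mset_set F))"
    using insert by (intro K0_add2) auto
  then show ?case using insert by simp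
qed

lemma ses_iso:
  assumes cat: "is_category C" and zero: "is_zero_object C Z"
    and g: "g \<in> hom C X Y" and ig: "iso C g"
  shows "ses C Z X Y"
proof -
  note c = cat[unfolded is_category_def]
  have idh: "\<And>X. Idm C X \<in> hom C X X" using c by blast
  have comph: "\<And>f g. Cod C f = Dom C g \<Longrightarrow> Comp C g f \<in> hom C (Dom C f) (Cod C g)" using c by blast
  have idl: "\<And>f. Comp C f (Idm C (Dom C f)) = f" and idr: "\<And>f. Comp C (Idm C (Cod C f)) f = f" using c by blast+
  have assoc: "\<And>f g h. Cod C f = Dom C g \<Longrightarrow> Cod C g = Dom C h \<Longrightarrow>
        Comp C h (Comp C g f) = Comp C (Comp C h g) f" using c by blast
  have zin: "\<And>D. \<exists>!f. f \<in> hom C D Z" and zout: "\<And>D. \<exists>!f. f \<in> hom C Z D"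
    using zero unfolding is_zero_object_def by blast+
  obtain gi where gi: "gi \<in> hom C Y X" "Comp C gi g = Idm C X" "Comp C g gi = Idm C Y"
    using ig g unfolding iso_def hom_def by auto
  obtain f where f: "f \<in> hom C Z X" using zout by blast
  have gd: "Dom C g = X" "Cod C g = Y" using g by (auto simp: hom_def)
  have gid: "Dom C gi = Y" "Cod C gi = X" using gi by (auto simp: hom_def)
  have fd: "Dom C f = Z" "Cod C f = X" using f by (auto simp: hom_def)
  have mono: "mono C f"
    unfolding mono_def
  proof (intro allI impI)
    fix a b assume "Cod C a = Dom C f \<and> Cod C b = Dom C f \<and> Dom C a = Dom C b \<and> Comp C f a = Comp C f b"
    hence "a \<in> hom C (Dom C a) Z" "b \<in> hom C (Dom C a) Z" using fd by (auto simp: hom_def)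
    thus "a = b" using zin by blast
  qed
  have epi: "epi C g"
    unfolding epi_def
  proof (intro allI impI)
    fix a b assume h: "Dom C a = Cod C g \<and> Dom C b = Cod C g \<and> Cod C a = Cod C b \<and> Comp C a g = Comp C b g"
    have "a = Comp C a (Idm C Y)" using idl[of a] h gd by simp
    also have "\<dots> = Comp C a (Comp C g gi)" using gi by simp
    also have "\<dots> = Comp C (Comp C a g) gi" using assoc[of gi g a] gid gd h by simp
    also have "\<dots> = Comp C (Comp C b g) gi" using h by simp
    also have "\<dots> = Comp C b (Comp C g gi)" using assoc[of gi g b] gid gd h by simp
    also have "\<dots> = b" using gi idl[of b] h gd by simp
    finally show "a = b" .
  qed
  have gf: "Comp C g f \<in> hom C Z Y" using comph[of f g] fd gd by simp
  have zm: "zero_mor C (Comp C g f)"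
    unfolding zero_mor_def
  proof (intro exI conjI)
    show "is_zero_object C Z" by (rule zero)
    show "Idm C Z \<in> hom C (Dom C (Comp C g f)) Z" using gf idh by (simp add: hom_def)
    show "Comp C g f \<in> hom C Z (Cod C (Comp C g f))" using gf by (simp add: hom_def)
    show "Comp C g f = Comp C (Comp C g f) (Idm C Z)" using idl[of "Comp C g f"] gf by (simp add: hom_def)
  qed
  have ker: "is_kernel C f g"
    unfolding is_kernel_def
  proof (intro conjI allI impI)
    show "Cod C f = Dom C g" using fd gd by simp
    show "zero_mor C (Comp C g f)" by (rule zm)
    fix h assume hh: "Cod C h = Dom C g \<and> zero_mor C (Comp C g h)"
    have ghh: "Comp C g h \<in> hom C (Dom C h) Y" using comph[of h g] hh gd by simp
    obtain Z' a b where ab: "is_zero_object C Z'" "a \<in> hom C (Dom C h) Z'" "b \<in> hom C Z' Y"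
      "Comp C g h = Comp C b a"
      using hh ghh unfolding zero_mor_def hom_def by auto
    obtain u where u: "u \<in> hom C (Dom C h) Z" using zin by blast
    obtain t where t: "t \<in> hom C Z Z'" using ab(1) unfolding is_zero_object_def by blast
    have tu: "Comp C t u \<in> hom C (Dom C h) Z'" using comph[of u t] u t by (simp add: hom_def)
    have "\<exists>!f. f \<in> hom C (Dom C h) Z'" using ab(1) unfolding is_zero_object_def by blast
    hence atu: "a = Comp C t u" using tu ab(2) by blast
    have gib: "Comp C gi b \<in> hom C Z' X" using comph[of b gi] ab(3) gi by (simp add: hom_def)
    have gibt: "Comp C (Comp C gi b) t \<in> hom C Z X" using comph[of t "Comp C gi b"] t gib by (simp add: hom_def)
    hence fe: "Comp C (Comp C gi b) t = f" using zout f by blast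
    have "h = Comp C (Idm C X) h" using idr[of h] hh gd by simp
    also have "\<dots> = Comp C (Comp C gi g) h" using gi by simp
    also have "\<dots> = Comp C gi (Comp C g h)" using assoc[of h g gi] hh gd gid by simp
    also have "\<dots> = Comp C gi (Comp C b a)" using ab by simp
    also have "\<dots> = Comp C (Comp C gi b) a" using assoc[of a b gi] ab gid by (simp add: hom_def)
    also have "\<dots> = Comp C (Comp C gi b) (Comp C t u)" using atu by simp
    also have "\<dots> = Comp C (Comp C (Comp C gi b) t) u" using assoc[of u t "Comp C gi b"] u t gib by (simp add: hom_def)
    also have "\<dots> = Comp C f u" using fe by simp
    finally have hu: "h = Comp C f u" .
    show "\<exists>!u. u \<in> hom C (Dom C h) (Dom C f) \<and> Comp C f u = h"
    proof
      show "u \<in> hom C (Dom C h) (Dom C f) \<and> Comp C f u = h" using u hu fd by simp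
    next
      fix v assume "v \<in> hom C (Dom C h) (Dom C f) \<and> Comp C f v = h"
      thus "v = u" using u fd zin by blast
    qed
  qed
  show ?thesis unfolding ses_def using f g mono epi ker by blast
qed

lemma iso_id: "is_category C \<Longrightarrow> Idm C X \<in> hom C X X \<and> iso C (Idm C X)"
proof -
  assume c: "is_category C"
  have h: "Idm C X \<in> hom C X X" using c unfolding is_category_def by blast
  hence d: "Dom C (Idm C X) = X" "Cod C (Idm C X) = X" by (auto simp: hom_def)
  have "Comp C (Idm C X) (Idm C (Dom C (Idm C X))) = Idm C X" using c unfolding is_category_def by blast
  hence e: "Comp C (Idm C X) (Idm C X) = Idm C X" using d by simp
  show ?thesis unfolding iso_def using h d e by auto
qed

lemma isomorphic_K0:
  assumes "abelian_category C" "isomorphic C X Y"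
  shows "K0_eq C {#X#} {#Y#}"
proof -
  have cat: "is_category C" using assms unfolding abelian_category_def by blast
  obtain Z where z: "is_zero_object C Z" using assms unfolding abelian_category_def by blast
  obtain g where g: "g \<in> hom C X Y" "iso C g" using assms unfolding isomorphic_def by blast
  have 1: "K0_eq C {#X#} {#Z, Y#}" using K0_eq.K0_gen[OF ses_iso[OF cat z g], where M="{#}"] by simp
  have 2: "K0_eq C {#Y#} {#Z, Y#}" using K0_eq.K0_gen[OF ses_iso[OF cat z iso_id[OF cat, THEN conjunct1] iso_id[OF cat, THEN conjunct2]], where M="{#}"] by simp
  show ?thesis using K0_eq.K0_trans[OF 1 K0_eq.K0_sym[OF 2]] by simp
qed



lemma bnd_K0:
  assumes ab: "abelian_category C" and fP: "finite P"
    and bd: "\<forall>p\<in>P. \<exists>e\<in>E. {e'\<in>E. f e' = p \<or> g e' = p} = {e} \<and> isomorphic C (lp p) (lab e)"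
    and gn: "\<forall>e\<in>E. g e \<notin> P"
  shows "K0_eq C (image_mset lp (mset_set P)) (image_mset lab (mset_set {e\<in>E. f e \<in> P}))"
proof -
  define ep where "ep p = (SOME e. e \<in> E \<and> {e'\<in>E. f e' = p \<or> g e' = p} = {e} \<and> isomorphic C (lp p) (lab e))" for p
  have ep: "ep p \<in> E \<and> {e'\<in>E. f e' = p \<or> g e' = p} = {ep p} \<and> isomorphic C (lp p) (lab (ep p))"
    if "p \<in> P" for p
    unfolding ep_def by (rule someI_ex) (use bd that in blast)
  have fe: "f (ep p) = p" if "p \<in> P" for p
  proof -
    have "ep p \<in> {e'\<in>E. f e' = p \<or> g e' = p}" using ep[OF that] by blast
    hence "f (ep p) = p \<or> g (ep p) = p" "ep p \<in> E" by auto
    thus ?thesis using gn that by auto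
  qed
  have inj: "inj_on ep P"
  proof (rule inj_onI)
    fix x y assume "x \<in> P" "y \<in> P" "ep x = ep y"
    thus "x = y" using fe by metis
  qed
  have im: "ep ` P = {e\<in>E. f e \<in> P}"
  proof
    show "ep ` P \<subseteq> {e\<in>E. f e \<in> P}"
    proof
      fix e assume "e \<in> ep ` P"
      then obtain p where "p \<in> P" "e = ep p" by blast
      thus "e \<in> {e\<in>E. f e \<in> P}" using ep[of p] fe[of p] by simp
    qed
    show "{e\<in>E. f e \<in> P} \<subseteq> ep ` P"
    proof
      fix e assume e: "e \<in> {e\<in>E. f e \<in> P}"
      hence "e \<in> {e'\<in>E. f e' = f e \<or> g e' = f e}" by blast
      moreover have "{e'\<in>E. f e' = f e \<or> g e' = f e} = {ep (f e)}" using ep[of "f e"] e by blast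
      ultimately have "e = ep (f e)" by blast
      thus "e \<in> ep ` P" using e by blast
    qed
  qed
  have "image_mset lab (mset_set {e\<in>E. f e \<in> P}) = image_mset (lab \<circ> ep) (mset_set P)"
  proof -
    have "image_mset (lab \<circ> ep) (mset_set P) = image_mset lab (image_mset ep (mset_set P))"
      by (simp add: multiset.map_comp)
    also have "\<dots> = image_mset lab (mset_set {e\<in>E. f e \<in> P})"
      using image_mset_mset_set[OF inj] im by simp
    finally show ?thesis by simp
  qed
  moreover have "K0_eq C (image_mset lp (mset_set P)) (image_mset (lab \<circ> ep) (mset_set P))"
  proof (rule K0_image[OF fP])
    fix x assume "x \<in> P"
    hence "isomorphic C (lp x) (lab (ep x))" using ep by blast
    thus "K0_eq C {#lp x#} {#(lab \<circ> ep) x#}" using isomorphic_K0[OF ab] by simp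
  qed
  ultimately show ?thesis by simp
qed



lemma braid_K0:
  fixes C :: "('o, 'm) cat"
  assumes ab: "abelian_category C" and "braid_cob C M0 M1"
  shows "K0_eq C M0 M1"
proof -
  obtain P0 P1 V :: "nat set" and E :: "nat set" and lp :: "nat \<Rightarrow> 'o" and src tgt :: "nat \<Rightarrow> nat" and lab :: "nat \<Rightarrow> 'o" and ht :: "nat \<Rightarrow> real" where
    fin: "finite P0" "finite P1" "finite V" "finite E" and
    dj: "P0 \<inter> P1 = {}" "P0 \<inter> V = {}" "P1 \<inter> V = {}" and
    m0: "image_mset lp (mset_set P0) = M0" and m1: "image_mset lp (mset_set P1) = M1" and
    ends: "\<forall>e\<in>E. src e \<in> P0 \<union> P1 \<union> V \<and> tgt e \<in> P0 \<union> P1 \<union> V" and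
    bd: "\<forall>p\<in>P0 \<union> P1. \<exists>e\<in>E. {e'\<in>E. src e' = p \<or> tgt e' = p} = {e} \<and>
            isomorphic C (lp p) (lab e)" and
    vt: "\<forall>v\<in>V. \<exists>e1 e2 e3. e1 \<in> E \<and> e2 \<in> E \<and> e3 \<in> E \<and> e1 \<noteq> e2 \<and>
            ((({e\<in>E. tgt e = v} = {e1, e2} \<and> {e\<in>E. src e = v} = {e3}) \<or>
              ({e\<in>E. src e = v} = {e1, e2} \<and> {e\<in>E. tgt e = v} = {e3})) \<and>
             ses C (lab e1) (lab e3) (lab e2))" and
    h0: "\<forall>p\<in>P0. ht p = 0" and h1: "\<forall>p\<in>P1. ht p = 1" and hv: "\<forall>v\<in>V. 0 < ht v \<and> ht v < 1" and
    he: "\<forall>e\<in>E. ht (src e) < ht (tgt e)"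
    using assms(2) unfolding braid_cob_def by (elim exE conjE) (rule that; assumption)
  have hrange: "0 \<le> ht x \<and> ht x \<le> 1" if hx: "x \<in> P0 \<union> P1 \<union> V" for x
  proof -
    consider "x \<in> P0" | "x \<in> P1" | "x \<in> V" using hx by blast
    thus ?thesis
    proof cases
      case 1 thus ?thesis using h0 by simp
    next
      case 2 thus ?thesis using h1 by simp
    next
      case 3 thus ?thesis using hv by (simp add: less_imp_le)
    qed
  qed
  have tgtP0: "tgt e \<notin> P0" if "e \<in> E" for e
  proof
    assume "tgt e \<in> P0"
    hence "ht (tgt e) = 0" using h0 by blast
    moreover have "0 \<le> ht (src e)" using hrange ends that by blast
    moreover have "ht (src e) < ht (tgt e)" using he that by blast
    ultimately show False by linarith
  qed
  have srcP1: "src e \<notin> P1" if "e \<in> E" for e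
  proof
    assume "src e \<in> P1"
    hence "ht (src e) = 1" using h1 by blast
    moreover have "ht (tgt e) \<le> 1" using hrange ends that by blast
    moreover have "ht (src e) < ht (tgt e)" using he that by blast
    ultimately show False by linarith
  qed
  define cut where "cut T = image_mset lab (mset_set {e\<in>E. src e \<in> T \<and> tgt e \<notin> T})" for T
  define down where "down S = (\<forall>e\<in>E. tgt e \<in> S \<longrightarrow> src e \<in> P0 \<union> S)" for S
  have main: "S \<subseteq> V \<Longrightarrow> down S \<Longrightarrow> K0_eq C (cut P0) (cut (P0 \<union> S))" for S
  proof (induction "card S" arbitrary: S)
    case 0
    have "finite S" using 0 fin(3) finite_subset by blast
    hence "S = {}" using 0 by simp
    thus ?case by (simp add: K0_eq.K0_refl)
  next
    case (Suc n)
    have fS: "finite S" using Suc fin(3) finite_subset by blast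
    hence ne: "S \<noteq> {}" using Suc by auto
    have mi: "Max (ht ` S) \<in> ht ` S" using fS ne by (intro Max_in) auto
    then obtain v where v1: "v \<in> S" "ht v = Max (ht ` S)" by (metis imageE)
    have v2: "\<forall>w\<in>S. ht w \<le> ht v" using v1 fS by simp
    note v = v1(1) v2
    define S' where "S' = S - {v}"
    have vV: "v \<in> V" using v Suc by auto
    have down': "down S'" unfolding down_def
    proof (intro ballI impI)
      fix e assume e: "e \<in> E" "tgt e \<in> S'"
      hence "src e \<in> P0 \<union> S" using Suc(4) unfolding down_def S'_def by auto
      moreover have "src e \<noteq> v" using e v he unfolding S'_def by fastforce
      ultimately show "src e \<in> P0 \<union> S'" unfolding S'_def by auto
    qed
    have IH: "K0_eq C (cut P0) (cut (P0 \<union> S'))"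
    proof (rule Suc(1))
      show "n = card S'" using Suc(2) fS v unfolding S'_def by (simp add: card_Diff_singleton)
      show "S' \<subseteq> V" using Suc(3) unfolding S'_def by blast
      show "down S'" by (rule down')
    qed
    define T where "T = P0 \<union> S'"
    have vT: "v \<notin> T" using dj vV unfolding T_def S'_def by auto
    have TS: "P0 \<union> S = insert v T" using v unfolding T_def S'_def by auto
    define A where "A = {e\<in>E. src e \<in> T \<and> tgt e \<notin> T}"
    define I where "I = {e\<in>E. tgt e = v}"
    define Ou where "Ou = {e\<in>E. src e = v}"
    have IA: "I \<subseteq> A"
    proof
      fix e assume e: "e \<in> I"
      hence "src e \<in> P0 \<union> S" using Suc(4) v unfolding down_def I_def by auto
      moreover have "src e \<noteq> v" using e he unfolding I_def by fastforce
      ultimately show "e \<in> A" using e vT unfolding A_def I_def T_def S'_def by auto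
    qed
    have A': "{e\<in>E. src e \<in> insert v T \<and> tgt e \<notin> insert v T} = (A - I) \<union> Ou"
    proof
      show "{e\<in>E. src e \<in> insert v T \<and> tgt e \<notin> insert v T} \<subseteq> (A - I) \<union> Ou"
        unfolding A_def I_def Ou_def by auto
      show "(A - I) \<union> Ou \<subseteq> {e\<in>E. src e \<in> insert v T \<and> tgt e \<notin> insert v T}"
      proof
        fix e assume "e \<in> (A - I) \<union> Ou"
        then consider "e \<in> A - I" | "e \<in> Ou" by blast
        thus "e \<in> {e\<in>E. src e \<in> insert v T \<and> tgt e \<notin> insert v T}"
        proof cases
          case 1 thus ?thesis unfolding A_def I_def by auto
        next
          case 2
          hence e: "e \<in> E" "src e = v" unfolding Ou_def by auto
          have "tgt e \<noteq> v" using e he by fastforce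
          moreover have "tgt e \<notin> P0" using tgtP0 e by auto
          moreover have "tgt e \<notin> S'" using e he v unfolding S'_def by fastforce
          ultimately show ?thesis using e unfolding T_def by auto
        qed
      qed
    qed
    have fA: "finite A" "finite I" "finite Ou" using fin(4) unfolding A_def I_def Ou_def by auto
    have dAO: "(A - I) \<inter> Ou = {}" using vT unfolding A_def Ou_def by auto
    have cT: "cut T = image_mset lab (mset_set (A - I)) + image_mset lab (mset_set I)"
    proof -
      have "A = (A - I) \<union> I" using IA by auto
      hence "mset_set A = mset_set (A - I) + mset_set I"
        using mset_set_Union[of "A - I" I] fA by auto
      thus ?thesis unfolding cut_def A_def by simp
    qed
    have cS: "cut (insert v T) = image_mset lab (mset_set (A - I)) + image_mset lab (mset_set Ou)"
      unfolding cut_def A' using mset_set_Union[of "A - I" Ou] fA dAO by simp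
    have IO: "K0_eq C (image_mset lab (mset_set I)) (image_mset lab (mset_set Ou))"
    proof -
      obtain e1 e2 e3 where ee: "e1 \<noteq> e2"
        "(I = {e1, e2} \<and> Ou = {e3}) \<or> (Ou = {e1, e2} \<and> I = {e3})"
        "ses C (lab e1) (lab e3) (lab e2)"
        using vt[rule_format, OF vV] unfolding I_def[symmetric] Ou_def[symmetric] by blast
      have g: "K0_eq C {#lab e3#} {#lab e1, lab e2#}"
        using K0_eq.K0_gen[OF ee(3), where M="{#}"] by (simp add: add_mset_commute)
      have m2: "image_mset lab (mset_set {e1,e2}) = {#lab e1, lab e2#}" using ee(1) by simp
      have m1: "image_mset lab (mset_set {e3}) = {#lab e3#}" by simp
      from ee(2) show ?thesis
      proof
        assume "I = {e1, e2} \<and> Ou = {e3}"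
        thus ?thesis using K0_eq.K0_sym[OF g] m1 m2 by simp
      next
        assume "Ou = {e1, e2} \<and> I = {e3}"
        thus ?thesis using g m1 m2 by simp
      qed
    qed
    have "K0_eq C (cut T) (cut (insert v T))"
      unfolding cT cS by (rule K0_add2[OF K0_eq.K0_refl IO])
    hence "K0_eq C (cut (P0 \<union> S')) (cut (P0 \<union> S))" using TS unfolding T_def by simp
    thus ?case using IH by (rule K0_eq.K0_trans[rotated])
  qed
  have downV: "down V" unfolding down_def using ends srcP1 by blast
  have top: "K0_eq C M0 (cut (P0 \<union> V))"
  proof -
    have "K0_eq C M0 (cut P0)"
    proof -
      have "{e\<in>E. src e \<in> P0 \<and> tgt e \<notin> P0} = {e\<in>E. src e \<in> P0}" using tgtP0 by auto
      moreover have "K0_eq C M0 (image_mset lab (mset_set {e\<in>E. src e \<in> P0}))"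
        unfolding m0[symmetric]
        by (rule bnd_K0[OF ab fin(1), where g=tgt]) (use bd tgtP0 in auto)
      ultimately show ?thesis unfolding cut_def by simp
    qed
    thus ?thesis using main[OF order_refl downV] K0_eq.K0_trans by blast
  qed
  have "{e\<in>E. src e \<in> P0 \<union> V \<and> tgt e \<notin> P0 \<union> V} = {e\<in>E. tgt e \<in> P1}"
    using ends srcP1 dj by blast
  moreover have "K0_eq C M1 (image_mset lab (mset_set {e\<in>E. tgt e \<in> P1}))"
  proof -
    have b: "\<forall>p\<in>P1. \<exists>e\<in>E. {e'\<in>E. tgt e' = p \<or> src e' = p} = {e} \<and> isomorphic C (lp p) (lab e)"
    proof
      fix p assume "p \<in> P1"
      then obtain e where "e \<in> E" "{e'\<in>E. src e' = p \<or> tgt e' = p} = {e} \<and> isomorphic C (lp p) (lab e)"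
        using bd by blast
      moreover have "{e'\<in>E. tgt e' = p \<or> src e' = p} = {e'\<in>E. src e' = p \<or> tgt e' = p}" by blast
      ultimately show "\<exists>e\<in>E. {e'\<in>E. tgt e' = p \<or> src e' = p} = {e} \<and> isomorphic C (lp p) (lab e)"
        by metis
    qed
    show ?thesis unfolding m1[symmetric]
      by (rule bnd_K0[OF ab fin(2) b]) (use srcP1 in auto)
  qed
  ultimately have "K0_eq C M1 (cut (P0 \<union> V))" unfolding cut_def by simp
  thus ?thesis using top K0_eq.K0_trans K0_eq.K0_sym by blast
qed



lemma gen_cob:
  fixes C :: "('o, 'm) cat"
  assumes ab: "abelian_category C" and s: "ses C X1 X2 X3"
  shows "braid_cob C (add_mset X2 M) (add_mset X1 (add_mset X3 M))"
proof -
  have cat: "is_category C" using ab unfolding abelian_category_def by blast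
  have isoX: "isomorphic C X X" for X unfolding isomorphic_def using iso_id[OF cat] by blast
  obtain xs where xs: "mset xs = M" using ex_mset by blast
  define n where "n = length xs"
  define P0 :: "nat set" where "P0 = {..n}"
  define P1 :: "nat set" where "P1 = {n+1..2*n+2}"
  define V :: "nat set" where "V = {2*n+3}"
  define E :: "nat set" where "E = {..n+2}"
  define lp :: "nat \<Rightarrow> 'o" where "lp i = (if i < n then xs!i else if i = n then X2 else
      if i \<le> 2*n then xs!(i-n-1) else if i = 2*n+1 then X1 else X3)" for i
  define src :: "nat \<Rightarrow> nat" where "src i = (if i \<le> n then i else 2*n+3)" for i
  define tgt :: "nat \<Rightarrow> nat" where "tgt i = (if i < n then n+1+i else if i = n then 2*n+3
      else if i = n+1 then 2*n+1 else 2*n+2)" for i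
  define lab :: "nat \<Rightarrow> 'o" where "lab i = (if i < n then xs!i else if i = n then X2
      else if i = n+1 then X1 else X3)" for i
  define ht :: "nat \<Rightarrow> real" where "ht i = (if i \<le> n then 0 else if i \<le> 2*n+2 then 1 else 1/2)" for i
  have c1: "finite P0 \<and> finite P1 \<and> finite V \<and> finite E"
    unfolding P0_def P1_def V_def E_def by auto
  have c2: "P0 \<inter> P1 = {} \<and> P0 \<inter> V = {} \<and> P1 \<inter> V = {}"
    unfolding P0_def P1_def V_def by auto
  have mx: "image_mset f (mset_set {a..<a+n}) = mset (map (\<lambda>i. f (i + a)) [0..<n])" for f :: "nat \<Rightarrow> 'o" and a
  proof -
    have "mset_set {a..<a+n} = mset [a..<a+n]" by (simp add: mset_upt)
    moreover have "[a..<a+n] = map (\<lambda>i. i + a) [0..<n]" by (simp add: map_add_upt add.commute)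
    ultimately show ?thesis by (simp add: multiset.map_comp o_def)
  qed
  have xsmap: "map g [0..<n] = xs" if "\<And>i. i < n \<Longrightarrow> g i = xs!i" for g
  proof -
    have "map g [0..<n] = map (nth xs) [0..<n]" by (rule map_cong) (auto intro: that)
    thus ?thesis unfolding n_def by (simp add: map_nth)
  qed
  have c3: "image_mset lp (mset_set P0) = add_mset X2 M"
  proof -
    have P: "P0 = insert n {0..<0+n}" unfolding P0_def by auto
    have a: "image_mset lp (mset_set {0..<0+n}) = mset (map (\<lambda>i. lp (i + 0)) [0..<n])" by (rule mx)
    have b: "map (\<lambda>i. lp (i + 0)) [0..<n] = xs" by (rule xsmap) (simp add: lp_def)
    have c: "lp n = X2" by (simp add: lp_def)
    have "image_mset lp (mset_set P0) = add_mset (lp n) (image_mset lp (mset_set {0..<0+n}))"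
      unfolding P by simp
    also have "\<dots> = add_mset X2 M" unfolding a b c xs ..
    finally show ?thesis .
  qed
  have c4: "image_mset lp (mset_set P1) = add_mset X1 (add_mset X3 M)"
  proof -
    have P: "P1 = insert (2*n+1) (insert (2*n+2) {n+1..<(n+1)+n})" unfolding P1_def by auto
    have a: "image_mset lp (mset_set {n+1..<(n+1)+n}) = mset (map (\<lambda>i. lp (i + (n+1))) [0..<n])" by (rule mx)
    have b: "map (\<lambda>i. lp (i + (n+1))) [0..<n] = xs" by (rule xsmap) (simp add: lp_def)
    have c: "lp (2*n+1) = X1" "lp (2*n+2) = X3" by (simp_all add: lp_def)
    have "image_mset lp (mset_set P1) = add_mset (lp (2*n+1)) (add_mset (lp (2*n+2)) (image_mset lp (mset_set {n+1..<(n+1)+n})))"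
      unfolding P by simp
    also have "\<dots> = add_mset X1 (add_mset X3 M)" unfolding a b c xs ..
    finally show ?thesis .
  qed
  have c5: "\<forall>e\<in>E. src e \<in> P0 \<union> P1 \<union> V \<and> tgt e \<in> P0 \<union> P1 \<union> V"
    unfolding E_def P0_def P1_def V_def src_def tgt_def by auto
  have srcv: "src e' = p \<longleftrightarrow> (e' \<le> n \<and> e' = p) \<or> (n < e' \<and> p = 2*n+3)" for e' p
    unfolding src_def by auto
  have tgtv: "tgt e' = p \<longleftrightarrow> (e' < n \<and> p = n+1+e') \<or> (e' = n \<and> p = 2*n+3) \<or>
      (e' = n+1 \<and> p = 2*n+1) \<or> (n+1 < e' \<and> p = 2*n+2)" for e' p
    unfolding tgt_def by auto
  have c6: "\<forall>p\<in>P0 \<union> P1. \<exists>e\<in>E. {e'\<in>E. src e' = p \<or> tgt e' = p} = {e} \<and> isomorphic C (lp p) (lab e)"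
  proof
    fix p assume p: "p \<in> P0 \<union> P1"
    define e where "e = (if p \<le> n then p else if p \<le> 2*n then p - n - 1 else if p = 2*n+1 then n+1 else n+2)"
    have eE: "e \<in> E" using p unfolding e_def E_def P0_def P1_def by auto
    have inc: "{e'\<in>E. src e' = p \<or> tgt e' = p} = {e}"
    proof -
      consider "p \<le> n" | "n < p" "p \<le> 2*n" | "p = 2*n+1" | "p = 2*n+2" using p unfolding P0_def P1_def by fastforce
      thus ?thesis
      proof cases
        case 1 thus ?thesis unfolding e_def E_def srcv tgtv by auto
      next
        case 2 thus ?thesis unfolding e_def E_def srcv tgtv by auto
      next
        case 3 thus ?thesis unfolding e_def E_def srcv tgtv by auto
      next
        case 4 thus ?thesis unfolding e_def E_def srcv tgtv by auto
      qed
    qed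
    have "lp p = lab e"
      using p unfolding e_def P0_def P1_def lp_def lab_def by auto
    thus "\<exists>e\<in>E. {e'\<in>E. src e' = p \<or> tgt e' = p} = {e} \<and> isomorphic C (lp p) (lab e)"
      using eE inc isoX by metis
  qed
  have c7: "\<forall>v\<in>V. \<exists>e1 e2 e3. e1 \<in> E \<and> e2 \<in> E \<and> e3 \<in> E \<and> e1 \<noteq> e2 \<and>
            ((({e\<in>E. tgt e = v} = {e1, e2} \<and> {e\<in>E. src e = v} = {e3}) \<or>
              ({e\<in>E. src e = v} = {e1, e2} \<and> {e\<in>E. tgt e = v} = {e3})) \<and>
             ses C (lab e1) (lab e3) (lab e2))"
  proof
    fix v assume "v \<in> V"
    hence v: "v = 2*n+3" unfolding V_def by simp
    have a: "{e\<in>E. src e = v} = {n+1, n+2}" unfolding v E_def src_def by auto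
    have b: "{e\<in>E. tgt e = v} = {n}" unfolding v E_def tgt_def by auto
    have l: "lab (n+1) = X1" "lab n = X2" "lab (n+2) = X3" unfolding lab_def by auto
    show "\<exists>e1 e2 e3. e1 \<in> E \<and> e2 \<in> E \<and> e3 \<in> E \<and> e1 \<noteq> e2 \<and>
            ((({e\<in>E. tgt e = v} = {e1, e2} \<and> {e\<in>E. src e = v} = {e3}) \<or>
              ({e\<in>E. src e = v} = {e1, e2} \<and> {e\<in>E. tgt e = v} = {e3})) \<and>
             ses C (lab e1) (lab e3) (lab e2))"
      apply (rule exI[of _ "n+1"], rule exI[of _ "n+2"], rule exI[of _ n])
      using a b l s unfolding E_def by auto
  qed
  have c8: "(\<forall>p\<in>P0. ht p = 0) \<and> (\<forall>p\<in>P1. ht p = 1) \<and> (\<forall>v\<in>V. 0 < ht v \<and> ht v < 1) \<and>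
       (\<forall>e\<in>E. ht (src e) < ht (tgt e))"
    unfolding P0_def P1_def V_def E_def ht_def src_def tgt_def by auto
  show ?thesis unfolding braid_cob_def
    apply (rule exI[of _ P0], rule exI[of _ P1], rule exI[of _ V], rule exI[of _ E], rule exI[of _ lp],
        rule exI[of _ src], rule exI[of _ tgt], rule exI[of _ lab], rule exI[of _ ht])
    using c1 c2 c3 c4 c5 c6 c7 c8 by blast
qed


theorem mainTheorem6:
  fixes C :: "('o, 'm) cat"
  assumes "abelian_category C"
  shows "\<forall>M N :: 'o multiset. cob_equiv C M N \<longleftrightarrow> K0_eq C M N"
proof (intro allI iffI)
  fix M N :: "'o multiset"
  assume "cob_equiv C M N"
  hence "(\<lambda>M N. braid_cob C M N \<or> braid_cob C N M)\<^sup>*\<^sup>* M N" unfolding cob_equiv_def .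
  thus "K0_eq C M N"
  proof (induction rule: rtranclp_induct)
    case base thus ?case by (rule K0_eq.K0_refl)
  next
    case (step y z)
    have "K0_eq C y z"
    proof (cases "braid_cob C y z")
      case True thus ?thesis by (rule braid_K0[OF assms])
    next
      case False
      hence "braid_cob C z y" using step(2) by blast
      thus ?thesis by (rule K0_eq.K0_sym[OF braid_K0[OF assms]])
    qed
    thus ?case by (rule K0_eq.K0_trans[OF step(3)])
  qed
next
  fix M N :: "'o multiset"
  assume "K0_eq C M N"
  thus "cob_equiv C M N" unfolding cob_equiv_def
  proof (induction rule: K0_eq.induct)
    case (K0_gen X1 X2 X3 M)
    have "braid_cob C (add_mset X2 M) (add_mset X1 (add_mset X3 M))" by (rule gen_cob[OF assms K0_gen])
    thus ?case by (intro r_into_rtranclp) (rule disjI1)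
  next
    case (K0_refl M) thus ?case by simp
  next
    case (K0_sym M N)
    have "symp (\<lambda>M N. braid_cob C M N \<or> braid_cob C N M)" by (auto intro: sympI)
    from sympD[OF symp_rtranclp[OF this] K0_sym.IH] show ?case .
  next
    case (K0_trans M N P) show ?case by (rule rtranclp_trans[OF K0_trans.IH])
  qed
qed

end
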